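(* Let $(X,P,o)$ be a generalized parametric metric space such that $P$ satisfies (P5) and $o$ is continuous. Then $(X,\tau_P)$ is regular: for every closed set $A\subseteq X$ and every $x\in X\setminus A$ there exist disjoint $U,V\in\tau_P$ with $x\in U$ and $A\subseteq V$.
   Context: A binary operation $o:[0,\infty)\times[0,\infty)\to[0,\infty)$ (written $\alpha\, o\, \beta$) is assumed to satisfy, for all $\alpha,\beta,\gamma\in[0,\infty)$: (a) $\alpha\, o\, 0=\alpha$; (b) $\alpha\le\beta\implies \alpha\, o\,\gamma\le\beta\, o\,\gamma$; (c) $\alpha\, o\,\gamma=\gamma\, o\,\alpha$; (d) $\alpha\, o\,(\beta\, o\,\gamma)=(\alpha\, o\,\beta)\, o\,\gamma$. It is continuous if whenever $\alpha_n\to\alpha$ and $\beta_n\to\beta$ in $[0,\infty)$ we have $\alpha_n\, o\,\beta_n\to\alpha\, o\,\beta$. A generalized parametric metric on a nonempty set $X$ is a function $P:X\times X\times(0,\infty)\to[0,\infty)$ such that: (P1) $P(a,b,t)=0$ for all $t>0$ if and only if $a=b$; (P2) $P(a,b,t)=P(b,a,t)$ for all $a,b\in X$, $t>0$; (P3) $P(a,b,s+t)\le P(a,x,s)\, o\, P(b,x,t)$ for all $s,t>0$ and $a,b,x\in X$. The triple $(X,P,o)$ is a generalized parametric metric space. Condition (P5): for all $a,b\in X$, the map $t\mapsto P(a,b,t)$ is continuous on $(0,\infty)$. Open ball: $B(a,\alpha,t)=\{b\in X: P(a,b,t)<\alpha\}$. $\tau_P$ is the topology consisting of all $A\subseteq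 X$ such that for every $a\in A$ there exist $\alpha>0,t>0$ with $B(a,\alpha,t)\subseteq A$. A sequence $\{x_n\}$ converges to $x$ if $\lim_{n\to\infty}P(x_n,x,t)=0$ for all $t>0$. A set $A\subseteq X$ is closed if whenever a sequence in $A$ converges to some $x\in X$, then $x\in A$. *)

theory Defs
  imports "HOL-Analysis.Analysis"
begin

definition gp_op :: "(real \<Rightarrow> real \<Rightarrow> real) \<Rightarrow> bool" where
  "gp_op opr \<longleftrightarrow>
     (\<forall>a\<ge>0. \<forall>b\<ge>0. opr a b \<ge> 0) \<and>
     (\<forall>a\<ge>0. opr a 0 = a) \<and>
     (\<forall>a b c. 0 \<le> a \<longrightarrow> a \<le> b \<longrightarrow> 0 \<le> c \<longrightarrow> opr a c \<le> opr b c) \<and>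
     (\<forall>a\<ge>0. \<forall>c\<ge>0. opr a c = opr c a) \<and>
     (\<forall>a\<ge>0. \<forall>b\<ge>0. \<forall>c\<ge>0. opr a (opr b c) = opr (opr a b) c)"

definition gp_op_continuous :: "(real \<Rightarrow> real \<Rightarrow> real) \<Rightarrow> bool" where
  "gp_op_continuous opr \<longleftrightarrow>
     (\<forall>(a::nat \<Rightarrow> real) b x y. (\<forall>n. a n \<ge> 0 \<and> b n \<ge> 0) \<longrightarrow> x \<ge> 0 \<longrightarrow> y \<ge> 0 \<longrightarrow>
        a \<longlonglongrightarrow> x \<longrightarrow> b \<longlonglongrightarrow> y \<longrightarrow> (\<lambda>n. opr (a n) (b n)) \<longlonglongrightarrow> opr x y)"

text \<open>Generalized parametric metric on X (only values at t > 0 matter).\<close>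
definition gen_param_metric ::
  "'a set \<Rightarrow> ('a \<Rightarrow> 'a \<Rightarrow> real \<Rightarrow> real) \<Rightarrow> (real \<Rightarrow> real \<Rightarrow> real) \<Rightarrow> bool" where
  "gen_param_metric X P opr \<longleftrightarrow>
     X \<noteq> {} \<and> gp_op opr \<and>
     (\<forall>a\<in>X. \<forall>b\<in>X. \<forall>t>0. P a b t \<ge> 0) \<and>
     (\<forall>a\<in>X. \<forall>b\<in>X. (\<forall>t>0. P a b t = 0) \<longleftrightarrow> a = b) \<and>
     (\<forall>a\<in>X. \<forall>b\<in>X. \<forall>t>0. P a b t = P b a t) \<and>
     (\<forall>a\<in>X. \<forall>b\<in>X. \<forall>x\<in>X. \<forall>s>0. \<forall>t>0. P a b (s + t) \<le> opr (P a x s) (P b x t))"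

definition gp_P5 :: "'a set \<Rightarrow> ('a \<Rightarrow> 'a \<Rightarrow> real \<Rightarrow> real) \<Rightarrow> bool" where
  "gp_P5 X P \<longleftrightarrow> (\<forall>a\<in>X. \<forall>b\<in>X. continuous_on {0<..} (P a b))"

definition gp_ball :: "'a set \<Rightarrow> ('a \<Rightarrow> 'a \<Rightarrow> real \<Rightarrow> real) \<Rightarrow> 'a \<Rightarrow> real \<Rightarrow> real \<Rightarrow> 'a set" where
  "gp_ball X P a \<alpha> t = {b\<in>X. P a b t < \<alpha>}"

definition gp_open :: "'a set \<Rightarrow> ('a \<Rightarrow> 'a \<Rightarrow> real \<Rightarrow> real) \<Rightarrow> 'a set \<Rightarrow> bool" where
  "gp_open X P A \<longleftrightarrow> A \<subseteq> X \<and>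
     (\<forall>a\<in>A. \<exists>\<alpha>>0. \<exists>t>0. gp_ball X P a \<alpha> t \<subseteq> A)"

definition gp_converges :: "'a set \<Rightarrow> ('a \<Rightarrow> 'a \<Rightarrow> real \<Rightarrow> real) \<Rightarrow> (nat \<Rightarrow> 'a) \<Rightarrow> 'a \<Rightarrow> bool" where
  "gp_converges X P s x \<longleftrightarrow> (\<forall>t>0. (\<lambda>n. P (s n) x t) \<longlonglongrightarrow> 0)"

definition gp_closed :: "'a set \<Rightarrow> ('a \<Rightarrow> 'a \<Rightarrow> real \<Rightarrow> real) \<Rightarrow> 'a set \<Rightarrow> bool" where
  "gp_closed X P A \<longleftrightarrow> A \<subseteq> X \<and>
     (\<forall>s x. (\<forall>n. s n \<in> A) \<longrightarrow> x \<in> X \<longrightarrow> gp_converges X P s x \<longrightarrow> x \<in> A)"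

end

theory Submission
  imports Defs
begin

lemma gpm_split1: "gen_param_metric X P opr \<Longrightarrow> gp_op opr"
  unfolding gen_param_metric_def by (elim conjE) assumption
lemma gpm_split2: "gen_param_metric X P opr \<Longrightarrow> \<forall>a\<in>X. \<forall>b\<in>X. \<forall>t>0. P a b t \<ge> 0"
  unfolding gen_param_metric_def by (elim conjE) assumption
lemma gpm_split3: "gen_param_metric X P opr \<Longrightarrow> \<forall>a\<in>X. \<forall>b\<in>X. (\<forall>t>0. P a b t = 0) \<longleftrightarrow> a = b"
  unfolding gen_param_metric_def by (elim conjE) assumption
lemma gpm_split4: "gen_param_metric X P opr \<Longrightarrow> \<forall>a\<in>X. \<forall>b\<in>X. \<forall>t>0. P a b t = P b a t"
  unfolding gen_param_metric_def by (elim conjE) assumption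
lemma gpm_split5: "gen_param_metric X P opr \<Longrightarrow> \<forall>a\<in>X. \<forall>b\<in>X. \<forall>x\<in>X. \<forall>s>0. \<forall>t>0. P a b (s + t) \<le> opr (P a x s) (P b x t)"
  unfolding gen_param_metric_def by (elim conjE) assumption
lemma gpo_split1: "gp_op opr \<Longrightarrow> \<forall>a\<ge>0. \<forall>b\<ge>0. opr a b \<ge> 0"
  unfolding gp_op_def by (elim conjE) assumption
lemma gpo_split2: "gp_op opr \<Longrightarrow> \<forall>a\<ge>0. opr a 0 = a"
  unfolding gp_op_def by (elim conjE) assumption
lemma gpo_split3: "gp_op opr \<Longrightarrow> \<forall>a b c. 0 \<le> a \<longrightarrow> a \<le> b \<longrightarrow> 0 \<le> c \<longrightarrow> opr a c \<le> opr b c"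
  unfolding gp_op_def by (elim conjE) assumption
lemma gpo_split4: "gp_op opr \<Longrightarrow> \<forall>a\<ge>0. \<forall>c\<ge>0. opr a c = opr c a"
  unfolding gp_op_def by (elim conjE) assumption

lemma gpm_facts:
  assumes "gen_param_metric X P opr"
  shows "\<And>a b. a \<ge> 0 \<Longrightarrow> b \<ge> 0 \<Longrightarrow> opr a b \<ge> 0"
    and "\<And>a. a \<ge> 0 \<Longrightarrow> opr a 0 = a"
    and "\<And>a b c. 0 \<le> a \<Longrightarrow> a \<le> b \<Longrightarrow> 0 \<le> c \<Longrightarrow> opr a c \<le> opr b c"
    and "\<And>a c. a \<ge> 0 \<Longrightarrow> c \<ge> 0 \<Longrightarrow> opr a c = opr c a"
    and "\<And>a b t. a \<in> X \<Longrightarrow> b \<in> X \<Longrightarrow> t > 0 \<Longrightarrow> P a b t \<ge> 0"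
    and "\<And>a t. a \<in> X \<Longrightarrow> t > 0 \<Longrightarrow> P a a t = 0"
    and "\<And>a b t. a \<in> X \<Longrightarrow> b \<in> X \<Longrightarrow> t > 0 \<Longrightarrow> P a b t = P b a t"
    and "\<And>a b x s t. a \<in> X \<Longrightarrow> b \<in> X \<Longrightarrow> x \<in> X \<Longrightarrow> s > 0 \<Longrightarrow> t > 0 \<Longrightarrow>
            P a b (s + t) \<le> opr (P a x s) (P b x t)"
proof -
  note M = gpm_split1[OF assms] gpm_split2[OF assms] gpm_split3[OF assms] gpm_split4[OF assms] gpm_split5[OF assms]
  note O = gpo_split1[OF M(1)] gpo_split2[OF M(1)] gpo_split3[OF M(1)] gpo_split4[OF M(1)]
  show "\<And>a b. a \<ge> 0 \<Longrightarrow> b \<ge> 0 \<Longrightarrow> opr a b \<ge> 0" using O(1) by blast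
  show "\<And>a. a \<ge> 0 \<Longrightarrow> opr a 0 = a" using O(2) by blast
  show "\<And>a b c. 0 \<le> a \<Longrightarrow> a \<le> b \<Longrightarrow> 0 \<le> c \<Longrightarrow> opr a c \<le> opr b c" using O(3) by blast
  show "\<And>a c. a \<ge> 0 \<Longrightarrow> c \<ge> 0 \<Longrightarrow> opr a c = opr c a" using O(4) by blast
  show "\<And>a b t. a \<in> X \<Longrightarrow> b \<in> X \<Longrightarrow> t > 0 \<Longrightarrow> P a b t \<ge> 0" using M(2) by blast
  show "\<And>a b t. a \<in> X \<Longrightarrow> b \<in> X \<Longrightarrow> t > 0 \<Longrightarrow> P a b t = P b a t" using M(4) by blast
  show "\<And>a b x s t. a \<in> X \<Longrightarrow> b \<in> X \<Longrightarrow> x \<in> X \<Longrightarrow> s > 0 \<Longrightarrow> t > 0 \<Longrightarrow>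
            P a b (s + t) \<le> opr (P a x s) (P b x t)" using M(5) by blast
  fix a and t :: real assume a: "a \<in> X" and t: "t > 0"
  have "(\<forall>t>0. P a a t = 0) \<longleftrightarrow> a = a" using M(3) a by blast
  then show "P a a t = 0" using t by simp
qed

lemma mono2:
  assumes "gen_param_metric X P opr" "0 \<le> a" "0 \<le> b" "b \<le> c"
  shows "opr a b \<le> opr a c"
proof -
  have "opr a b = opr b a" using gpm_facts(4)[OF assms(1)] assms by simp
  also have "\<dots> \<le> opr c a" using gpm_facts(3)[OF assms(1)] assms by simp
  also have "\<dots> = opr a c" using gpm_facts(4)[OF assms(1)] assms by simp
  finally show ?thesis .
qed

lemma mono_t:
  assumes "gen_param_metric X P opr" "a \<in> X" "b \<in> X" "0 < s" "s \<le> t"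
  shows "P a b t \<le> P a b s"
proof (cases "s = t")
  case True then show ?thesis by simp
next
  case False
  then have d: "t - s > 0" using assms by simp
  have "P a b t = P a b (s + (t - s))" by simp
  also have "\<dots> \<le> opr (P a b s) (P b b (t - s))"
    using gpm_facts(8)[OF assms(1) assms(2,3,3) assms(4) d] .
  also have "\<dots> = P a b s" using gpm_facts(6)[OF assms(1) assms(3) d]
      gpm_facts(2)[OF assms(1)] gpm_facts(5)[OF assms(1) assms(2,3,4)] by simp
  finally show ?thesis .
qed

lemma inv_suc_lim: "(\<lambda>n. 1 / real (Suc n)) \<longlonglongrightarrow> 0"
  using LIMSEQ_Suc[OF lim_const_over_n[of 1]] by simp

lemma op_small2:
  assumes "gen_param_metric X P opr" "gp_op_continuous opr" "0 \<le> g" "g < \<alpha>"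
  shows "\<exists>\<beta>>0. opr g \<beta> < \<alpha>"
proof -
  have c: "(\<lambda>n. opr ((\<lambda>n. g) n) ((\<lambda>n. 1 / real (Suc n)) n)) \<longlonglongrightarrow> opr g 0"
    using assms(2)[unfolded gp_op_continuous_def, rule_format, of "\<lambda>n. g" "\<lambda>n. 1 / real (Suc n)" g 0]
      inv_suc_lim assms(3) by simp
  have "opr g 0 = g" using gpm_facts(2)[OF assms(1) assms(3)] .
  with c have "(\<lambda>n. opr g (1 / real (Suc n))) \<longlonglongrightarrow> g" by simp
  then have "eventually (\<lambda>n. opr g (1 / real (Suc n)) < \<alpha>) sequentially"
    using assms(4) by (rule order_tendstoD(2))
  then obtain N where "\<forall>n\<ge>N. opr g (1 / real (Suc n)) < \<alpha>"
    unfolding eventually_sequentially by blast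
  then have "opr g (1 / real (Suc N)) < \<alpha>" by blast
  moreover have "1 / real (Suc N) > 0" by simp
  ultimately show ?thesis by blast
qed

lemma op_small:
  assumes "gen_param_metric X P opr" "gp_op_continuous opr" "0 < \<epsilon>"
  shows "\<exists>\<delta>>0. opr \<delta> \<delta> < \<epsilon>"
proof -
  have c: "(\<lambda>n. opr ((\<lambda>n. 1 / real (Suc n)) n) ((\<lambda>n. 1 / real (Suc n)) n)) \<longlonglongrightarrow> opr 0 0"
    using assms(2)[unfolded gp_op_continuous_def, rule_format, of "\<lambda>n. 1 / real (Suc n)" "\<lambda>n. 1 / real (Suc n)" 0 0]
      inv_suc_lim by simp
  have "opr 0 0 = 0" using gpm_facts(2)[OF assms(1), of 0] by simp
  with c have "(\<lambda>n. opr (1 / real (Suc n)) (1 / real (Suc n))) \<longlonglongrightarrow> 0" by simp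
  then have "eventually (\<lambda>n. opr (1 / real (Suc n)) (1 / real (Suc n)) < \<epsilon>) sequentially"
    using assms(3) by (rule order_tendstoD(2))
  then obtain N where "\<forall>n\<ge>N. opr (1 / real (Suc n)) (1 / real (Suc n)) < \<epsilon>"
    unfolding eventually_sequentially by blast
  then have "opr (1 / real (Suc N)) (1 / real (Suc N)) < \<epsilon>" by blast
  moreover have "1 / real (Suc N) > 0" by simp
  ultimately show ?thesis by blast
qed

lemma ball_open:
  assumes gm: "gen_param_metric X P opr" and p5: "gp_P5 X P" and oc: "gp_op_continuous opr"
    and a: "a \<in> X" and t: "t > 0"
  shows "gp_open X P (gp_ball X P a \<alpha> t)"
  unfolding gp_open_def
proof (intro conjI ballI)
  show "gp_ball X P a \<alpha> t \<subseteq> X" unfolding gp_ball_def by auto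
next
  fix b assume "b \<in> gp_ball X P a \<alpha> t"
  then have b: "b \<in> X" and lt: "P a b t < \<alpha>" unfolding gp_ball_def by auto
  have "continuous_on {0<..} (P a b)" using p5 a b unfolding gp_P5_def by auto
  then have "isCont (P a b) t" using t by (simp add: continuous_on_eq_continuous_at)
  then have "\<forall>e>0. \<exists>d>0. \<forall>y. dist y t < d \<longrightarrow> dist (P a b y) (P a b t) < e"
    unfolding continuous_at_eps_delta .
  moreover have "\<alpha> - P a b t > 0" using lt by simp
  ultimately obtain d where d: "d > 0" and dd: "\<And>y. dist y t < d \<Longrightarrow> dist (P a b y) (P a b t) < \<alpha> - P a b t"
    by blast
  define s where "s = min (d/2) (t/2)"
  have s: "0 < s" "s < t" "s < d" using d t unfolding s_def by auto
  have "dist (t - s) t < d" using s by (simp add: dist_real_def)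
  from dd[OF this] have g: "P a b (t - s) < \<alpha>" by (simp add: dist_real_def abs_less_iff)
  have g0: "P a b (t - s) \<ge> 0" using gpm_facts(5)[OF gm a b] s by simp
  obtain \<beta> where \<beta>: "\<beta> > 0" "opr (P a b (t - s)) \<beta> < \<alpha>" using op_small2[OF gm oc g0 g] by blast
  have sub: "gp_ball X P b \<beta> s \<subseteq> gp_ball X P a \<alpha> t"
    proof
      fix c assume "c \<in> gp_ball X P b \<beta> s"
      then have c: "c \<in> X" and pc: "P b c s < \<beta>" unfolding gp_ball_def by auto
      have ts: "t - s > 0" using s by simp
      have "P a c t = P a c ((t - s) + s)" by simp
      also have "\<dots> \<le> opr (P a b (t - s)) (P c b s)" using gpm_facts(8)[OF gm a c b ts s(1)] .
      also have "\<dots> \<le> opr (P a b (t - s)) \<beta>"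
        using mono2[OF gm g0, of "P c b s" \<beta>] gpm_facts(5)[OF gm c b s(1)]
          gpm_facts(7)[OF gm b c s(1)] pc by simp
      finally have "P a c t < \<alpha>" using \<beta> by simp
      then show "c \<in> gp_ball X P a \<alpha> t" using c unfolding gp_ball_def by auto
    qed
  show "\<exists>\<alpha>'>0. \<exists>t'>0. gp_ball X P b \<alpha>' t' \<subseteq> gp_ball X P a \<alpha> t"
    using sub \<beta>(1) s(1) by blast
qed

lemma sep_ball:
  assumes gm: "gen_param_metric X P opr" and cl: "gp_closed X P A" and x: "x \<in> X - A"
  shows "\<exists>\<epsilon>>0. \<exists>r>0. \<forall>a\<in>A. \<epsilon> \<le> P x a r"
proof (rule ccontr)
  assume "\<not> ?thesis"
  note nt = this
  have "\<forall>n. \<exists>a. a \<in> A \<and> P x a (1 / real (Suc n)) < 1 / real (Suc n)"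
  proof
    fix n
    have e: "1 / real (Suc n) > 0" by simp
    have "\<not> (\<forall>a\<in>A. 1 / real (Suc n) \<le> P x a (1 / real (Suc n)))"
      using nt e by blast
    then show "\<exists>a. a \<in> A \<and> P x a (1 / real (Suc n)) < 1 / real (Suc n)" by (auto simp: not_le)
  qed
  then have "\<exists>sq. \<forall>n. sq n \<in> A \<and> P x (sq n) (1 / real (Suc n)) < 1 / real (Suc n)"
    by (rule choice)
  then obtain sq where sq: "\<And>n. sq n \<in> A" "\<And>n. P x (sq n) (1 / real (Suc n)) < 1 / real (Suc n)"
    by blast
  have AX: "A \<subseteq> X" using cl unfolding gp_closed_def by auto
  have xX: "x \<in> X" using x by auto
  have "gp_converges X P sq x"
    unfolding gp_converges_def
  proof (intro allI impI)
    fix t :: real assume t: "t > 0"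
    obtain N where N: "1 / real (Suc N) < t" using reals_Archimedean[OF t] by (auto simp: inverse_eq_divide)
    have ev: "eventually (\<lambda>n. P (sq n) x t \<le> 1 / real (Suc n)) sequentially"
      unfolding eventually_sequentially
    proof (intro exI allI impI)
      fix n assume "N \<le> n"
      then have "1 / real (Suc n) \<le> 1 / real (Suc N)" by (simp add: frac_le)
      then have le: "1 / real (Suc n) \<le> t" using N by simp
      have "P (sq n) x t = P x (sq n) t" using gpm_facts(7)[OF gm _ xX t] sq(1) AX by auto
      also have "\<dots> \<le> P x (sq n) (1 / real (Suc n))"
        using mono_t[OF gm xX _ _ le] sq(1) AX by auto
      finally show "P (sq n) x t \<le> 1 / real (Suc n)" using sq(2)[of n] by simp
    qed
    have ev0: "eventually (\<lambda>n. 0 \<le> P (sq n) x t) sequentially"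
      using gpm_facts(5)[OF gm _ xX t] sq(1) AX by (intro always_eventually) blast
    show "(\<lambda>n. P (sq n) x t) \<longlonglongrightarrow> 0"
      by (rule tendsto_sandwich[OF ev0 ev tendsto_const inv_suc_lim])
  qed
  then have "x \<in> A" using cl sq(1) xX unfolding gp_closed_def by blast
  then show False using x by simp
qed

theorem mainTheorem10:
  fixes X :: "'a set" and P :: "'a \<Rightarrow> 'a \<Rightarrow> real \<Rightarrow> real" and opr :: "real \<Rightarrow> real \<Rightarrow> real"
  assumes "gen_param_metric X P opr"
    and "gp_P5 X P"
    and "gp_op_continuous opr"
    and "gp_closed X P A"
    and "x \<in> X - A"
  shows "\<exists>U V. gp_open X P U \<and> gp_open X P V \<and> U \<inter> V = {} \<and> x \<in> U \<and> A \<subseteq> V"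
proof -
  note gm = assms(1)
  have AX: "A \<subseteq> X" using assms(4) unfolding gp_closed_def by auto
  have xX: "x \<in> X" using assms(5) by auto
  obtain \<epsilon> r where er: "\<epsilon> > 0" "r > 0" "\<And>a. a \<in> A \<Longrightarrow> \<epsilon> \<le> P x a r"
    using sep_ball[OF gm assms(4,5)] by blast
  obtain \<delta> where \<delta>: "\<delta> > 0" "opr \<delta> \<delta> < \<epsilon>" using op_small[OF gm assms(3) er(1)] by blast
  have r2: "r / 2 > 0" using er by simp
  define U where "U = gp_ball X P x \<delta> (r/2)"
  define V where "V = (\<Union>a\<in>A. gp_ball X P a \<delta> (r/2))"
  have oU: "gp_open X P U" unfolding U_def by (rule ball_open[OF gm assms(2,3) xX r2])
  have oV: "gp_open X P V"
    unfolding gp_open_def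
  proof (intro conjI ballI)
    show "V \<subseteq> X" unfolding V_def gp_ball_def by auto
  next
    fix y assume "y \<in> V"
    then obtain a where a: "a \<in> A" "y \<in> gp_ball X P a \<delta> (r/2)" unfolding V_def by auto
    have "gp_open X P (gp_ball X P a \<delta> (r/2))" using ball_open[OF gm assms(2,3) _ r2] a AX by auto
    then obtain \<alpha> t where "\<alpha> > 0" "t > 0" "gp_ball X P y \<alpha> t \<subseteq> gp_ball X P a \<delta> (r/2)"
      using a(2) unfolding gp_open_def by blast
    then show "\<exists>\<alpha>>0. \<exists>t>0. gp_ball X P y \<alpha> t \<subseteq> V" using a(1) unfolding V_def by blast
  qed
  have xU: "x \<in> U" unfolding U_def gp_ball_def using gpm_facts(6)[OF gm xX r2] xX \<delta> by simp
  have AV: "A \<subseteq> V"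
  proof
    fix a assume a: "a \<in> A"
    then have "a \<in> gp_ball X P a \<delta> (r/2)" unfolding gp_ball_def using gpm_facts(6)[OF gm _ r2] AX \<delta> by auto
    then show "a \<in> V" using a unfolding V_def by auto
  qed
  have disj: "U \<inter> V = {}"
  proof (rule ccontr)
    assume "U \<inter> V \<noteq> {}"
    then obtain y a where y: "y \<in> X" "P x y (r/2) < \<delta>" and a: "a \<in> A" "P a y (r/2) < \<delta>"
      unfolding U_def V_def gp_ball_def by auto
    have aX: "a \<in> X" using a AX by auto
    have "P x a r = P x a (r/2 + r/2)" by simp
    also have "\<dots> \<le> opr (P x y (r/2)) (P a y (r/2))" using gpm_facts(8)[OF gm xX aX y(1) r2 r2] .
    also have "\<dots> \<le> opr \<delta> (P a y (r/2))"
      using gpm_facts(3)[OF gm _ _ gpm_facts(5)[OF gm aX y(1) r2]] gpm_facts(5)[OF gm xX y(1) r2] y by simp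
    also have "\<dots> \<le> opr \<delta> \<delta>"
      using mono2[OF gm _ gpm_facts(5)[OF gm aX y(1) r2]] a \<delta> by simp
    finally have "P x a r < \<epsilon>" using \<delta> by simp
    with er(3)[OF a(1)] show False by simp
  qed
  show ?thesis using oU oV disj xU AV by blast
qed

end
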